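(* Let $d\ge2$ and $p\ge1$ be integers and let $\mathbb{P}_k^{(d)}$ be the uniform probability measure on $\mathcal{C}_k^{(d)}$. Then with $\kappa_{p,d}:=(2pd^pe^p)^{-1}$, $$\mathbb{P}_k^{(d)}(T\text{ is not }p\text{-perfect})\le e^{-\kappa_{p,d}(k-p)_+}\qquad\text{for all }k\in\mathbb{N},$$ where $x_+=\max(x,0)$.
   Context: A $d$-Catalan tree is a rooted planar tree in which every vertex has $0$ or $d$ children; $\mathcal{C}_k^{(d)}$ is the set of such trees with $k$ internal (non-leaf) vertices. A tree $T$ is $p$-perfect if it contains a path $(v_0,\dots,v_p)$, with $v_i$ a child of $v_{i-1}$ for each $i$, such that each of the $(d-1)p$ siblings of $v_1,\dots,v_p$ is a leaf. *)

theory Defs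
  imports "HOL-Analysis.Analysis"
begin

datatype ptree = Leaf | Node "ptree list"

text \<open>d-Catalan tree: every vertex has 0 or d children (a Node with an empty child list
is not allowed, since leaves are represented by Leaf; d >= 2 in the theorem anyway).\<close>
fun dcatalan :: "nat \<Rightarrow> ptree \<Rightarrow> bool" where
  "dcatalan d Leaf = True"
| "dcatalan d (Node cs) = (length cs = d \<and> (\<forall>c\<in>set cs. dcatalan d c))"

fun internal :: "ptree \<Rightarrow> nat" where
  "internal Leaf = 0"
| "internal (Node cs) = Suc (sum_list (map internal cs))"

definition catalan_trees :: "nat \<Rightarrow> nat \<Rightarrow> ptree set" where
  "catalan_trees d k = {t. dcatalan d t \<and> internal t = k}"

fun subtrees :: "ptree \<Rightarrow> ptree set" where
  "subtrees Leaf = {Leaf}"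
| "subtrees (Node cs) = insert (Node cs) (\<Union>c\<in>set cs. subtrees c)"

fun perfect_path :: "nat \<Rightarrow> ptree \<Rightarrow> bool" where
  "perfect_path 0 t = True"
| "perfect_path (Suc q) Leaf = False"
| "perfect_path (Suc q) (Node cs) =
     (\<exists>i<length cs. perfect_path q (cs ! i) \<and> (\<forall>j<length cs. j \<noteq> i \<longrightarrow> cs ! j = Leaf))"

definition p_perfect :: "nat \<Rightarrow> ptree \<Rightarrow> bool" where
  "p_perfect p t = (\<exists>s\<in>subtrees t. perfect_path p s)"

end

theory Submission
  imports Defs
begin

definition forests :: "nat \<Rightarrow> nat \<Rightarrow> nat \<Rightarrow> ptree list set" where
  "forests d c n = {ts. length ts = c \<and> (\<forall>t\<in>set ts. dcatalan d t) \<and> sum_list (map internal ts) = n}"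

lemma forests_0: "forests d 0 n = (if n = 0 then {[]} else {})"
  by (auto simp: forests_def)

lemma forests_Suc:
  "forests d (Suc c) n = (Cons Leaf) ` forests d c n \<union>
     (if n = 0 then {} else (\<lambda>l. Node (take d l) # drop d l) ` forests d (c + d) (n - 1))"
proof (intro equalityI subsetI)
  fix ts assume "ts \<in> forests d (Suc c) n"
  then obtain t ts' where ts: "ts = t # ts'" and l: "length ts' = c" and dc: "dcatalan d t" "\<forall>u\<in>set ts'. dcatalan d u"
    and s: "internal t + sum_list (map internal ts') = n"
    by (cases ts) (auto simp: forests_def)
  show "ts \<in> (Cons Leaf) ` forests d c n \<union>
     (if n = 0 then {} else (\<lambda>l. Node (take d l) # drop d l) ` forests d (c + d) (n - 1))"
  proof (cases t)
    case Leaf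
    then show ?thesis using ts l dc s by (auto simp: forests_def)
  next
    case (Node cs)
    have "cs @ ts' \<in> forests d (c + d) (n - 1)" using Node dc s l by (auto simp: forests_def)
    moreover have "ts = (\<lambda>l. Node (take d l) # drop d l) (cs @ ts')" using Node dc ts by simp
    ultimately have "ts \<in> (\<lambda>l. Node (take d l) # drop d l) ` forests d (c + d) (n - 1)" by blast
    moreover have "n \<noteq> 0" using s Node by simp
    ultimately show ?thesis by simp
  qed
next
  fix ts assume "ts \<in> (Cons Leaf) ` forests d c n \<union>
     (if n = 0 then {} else (\<lambda>l. Node (take d l) # drop d l) ` forests d (c + d) (n - 1))"
  then show "ts \<in> forests d (Suc c) n"
  proof
    assume "ts \<in> (Cons Leaf) ` forests d c n" then show ?thesis by (auto simp: forests_def)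
  next
    assume a: "ts \<in> (if n = 0 then {} else (\<lambda>l. Node (take d l) # drop d l) ` forests d (c + d) (n - 1))"
    then have n: "n \<noteq> 0" by (auto split: if_splits)
    from a n obtain l where l: "l \<in> forests d (c + d) (n - 1)" and ts: "ts = Node (take d l) # drop d l" by auto
    have "sum_list (map internal l) = sum_list (map internal (take d l)) + sum_list (map internal (drop d l))"
      by (metis append_take_drop_id map_append sum_list_append)
    then show ?thesis using l ts n by (auto simp: forests_def dest: in_set_takeD in_set_dropD)
  qed
qed

lemma finite_forests: "finite (forests d c n)"
proof (induction n arbitrary: c rule: less_induct)
  case (less n)
  show ?case
  proof (induction c)
    case 0 then show ?case by (simp add: forests_0)
  next
    case (Suc c)
    have "finite (forests d (c + d) (n - 1))" if "n \<noteq> 0" using less that by simp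
    then show ?case using Suc by (simp add: forests_Suc)
  qed
qed

lemma card_forests_Suc:
  "card (forests d (Suc c) n) = card (forests d c n) + (if n = 0 then 0 else card (forests d (c + d) (n - 1)))"
proof -
  have i1: "inj_on (Cons Leaf) (forests d c n)" by (auto simp: inj_on_def)
  have i2: "inj_on (\<lambda>l. Node (take d l) # drop d l) (forests d (c + d) (n - 1))"
  proof (rule inj_onI)
    fix x y assume "x \<in> forests d (c + d) (n - 1)" "y \<in> forests d (c + d) (n - 1)"
      "Node (take d x) # drop d x = Node (take d y) # drop d y"
    then show "x = y" by (metis append_take_drop_id list.inject ptree.inject)
  qed
  have disj: "(Cons Leaf) ` forests d c n \<inter> (\<lambda>l. Node (take d l) # drop d l) ` forests d (c + d) (n - 1) = {}"
    by auto
  show ?thesis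
  proof (cases "n = 0")
    case True then show ?thesis by (simp add: forests_Suc card_image i1)
  next
    case False
    have "card (forests d (Suc c) n) = card ((Cons Leaf) ` forests d c n \<union> (\<lambda>l. Node (take d l) # drop d l) ` forests d (c + d) (n - 1))"
      unfolding forests_Suc using False by simp
    also have "\<dots> = card ((Cons Leaf) ` forests d c n) + card ((\<lambda>l. Node (take d l) # drop d l) ` forests d (c + d) (n - 1))"
      by (rule card_Un_disjoint[OF finite_imageI[OF finite_forests] finite_imageI[OF finite_forests] disj])
    finally have "card (forests d (Suc c) n) = card ((Cons Leaf) ` forests d c n) + card ((\<lambda>l. Node (take d l) # drop d l) ` forests d (c + d) (n - 1))" .
    then show ?thesis using False card_image[OF i1] card_image[OF i2] by simp
  qed
qed

lemma card_forests_n0: "card (forests d c 0) = 1"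
  by (induction c) (simp_all add: forests_0 card_forests_Suc)

lemma alg:
  fixes X Y c d n M B B1 B2 :: real
  assumes "X*M = c*B" "Y*M = (c+d)*B1" "B1*(M-n+1) = n*B" "B2*(M-n+1) = (M+1)*B"
    "M = d*n + c" "M > 0" "M - n + 1 > 0"
  shows "(X+Y)*(M+1) = (c+1)*B2"
proof -
  define K where "K = M - n + 1"
  have K: "K > 0" using assms(7) by (simp add: K_def)
  have x: "X = c*B/M" using assms(1,6) by (simp add: field_simps)
  have y: "Y = (c+d)*B1/M" using assms(2,6) by (simp add: field_simps)
  have b1: "B1 = n*B/K" using assms(3) K by (simp add: field_simps K_def)
  have b2: "B2 = (M+1)*B/K" using assms(4) K by (simp add: field_simps K_def)
  have e: "c*K + (c+d)*n = (c+1)*M" using assms(5) by (simp add: algebra_simps K_def)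
  have "X + Y = B*(c*K + (c+d)*n)/(M*K)" unfolding x y b1 using K assms(6) by (simp add: field_simps)
  also have "\<dots> = B*((c+1)*M)/(M*K)" using e by simp
  also have "\<dots> = (c+1)*B/K" using assms(6) K by (simp add: field_simps)
  finally show ?thesis unfolding b2 by (simp add: field_simps)
qed

lemma card_forests_formula:
  assumes "d \<ge> 1"
  shows "real (card (forests d c n)) * real (d * n + c) = real c * real ((d * n + c) choose n)"
proof (induction n arbitrary: c rule: less_induct)
  case (less n)
  show ?case
  proof (cases "n = 0")
    case True then show ?thesis by (simp add: card_forests_n0)
  next
    case False
    show ?thesis
    proof (induction c)
      case 0 then show ?case using False by (simp add: forests_0)
    next
      case (Suc c)
      define M where "M = d * n + c"
      have M1: "d * (n - 1) + (c + d) = M" using False by (cases n) (simp_all add: M_def algebra_simps)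
      have Mpos: "M > 0" using False assms by (simp add: M_def)
      have "n \<le> d * n" using assms by (metis mult_1 mult_le_mono1)
      then have Mn: "n \<le> M" unfolding M_def by (rule trans_le_add1)
      have IH1: "real (card (forests d c n)) * real M = real c * real (M choose n)"
        using Suc by (simp add: M_def)
      have IH2': "real (card (forests d (c+d) (n-1))) * real (d*(n-1)+(c+d)) = real (c + d) * real ((d*(n-1)+(c+d)) choose (n - 1))"
        using False by (intro less) simp
      then have IH2: "real (card (forests d (c+d) (n-1))) * real M = real (c + d) * real (M choose (n - 1))"
        unfolding M1 .
      have b1: "real (M choose (n - 1)) * (real M - real n + 1) = real n * real (M choose n)"
      proof -
        have "n * (M choose n) = M * ((M - 1) choose (n - 1))"
          using times_binomial_minus1_eq[of n M] False by simp
        moreover have "(M - (n - 1)) * (M choose (n - 1)) = M * ((M - 1) choose (n - 1))"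
          by (rule binomial_absorb_comp)
        moreover have "real (M - (n - 1)) = real M - real n + 1" using Mn False by (simp add: of_nat_diff)
        ultimately show ?thesis by (metis of_nat_mult mult.commute)
      qed
      have b2: "real (Suc M choose n) * (real M - real n + 1) = (real M + 1) * real (M choose n)"
      proof -
        have "(Suc M - n) * (Suc M choose n) = Suc M * ((Suc M - 1) choose n)" by (rule binomial_absorb_comp)
        moreover have "real (Suc M - n) = real M - real n + 1" using Mn by (simp add: of_nat_diff)
        ultimately show ?thesis by (metis diff_Suc_1 of_nat_mult mult.commute of_nat_Suc add.commute)
      qed
      have card: "real (card (forests d (Suc c) n)) = real (card (forests d c n)) + real (card (forests d (c+d) (n-1)))"
        using False by (simp add: card_forests_Suc)
      have "(real (card (forests d c n)) + real (card (forests d (c+d) (n-1)))) * (real M + 1)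
          = (real c + 1) * real (Suc M choose n)"
      proof (rule alg[OF IH1 _ b1 b2])
        show "real (card (forests d (c+d) (n-1))) * real M = (real c + real d) * real (M choose (n - 1))"
          using IH2 by simp
        show "real M = real d * real n + real c" by (simp add: M_def)
        show "0 < real M" using Mpos by simp
        show "0 < real M - real n + 1" using Mn by simp
      qed
      then show ?case using card by (simp add: M_def add.commute)
    qed
  qed
qed

lemma catalan_trees_forests: "catalan_trees d k = (\<lambda>ts. hd ts) ` forests d 1 k"
proof (intro equalityI subsetI)
  fix t assume "t \<in> catalan_trees d k"
  then have "[t] \<in> forests d 1 k" by (simp add: catalan_trees_def forests_def)
  then show "t \<in> (\<lambda>ts. hd ts) ` forests d 1 k" by (metis image_eqI list.sel(1))
next
  fix t assume "t \<in> (\<lambda>ts. hd ts) ` forests d 1 k"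
  then obtain ts where "ts \<in> forests d 1 k" "t = hd ts" by auto
  then show "t \<in> catalan_trees d k"
    by (cases ts) (auto simp: catalan_trees_def forests_def)
qed

lemma finite_catalan_trees: "finite (catalan_trees d k)"
  by (simp add: catalan_trees_forests finite_forests)

lemma card_catalan_trees: "card (catalan_trees d k) = card (forests d 1 k)"
proof -
  have "inj_on (\<lambda>ts. hd ts) (forests d 1 k)"
    by (rule inj_onI) (auto simp: forests_def length_Suc_conv)
  then show ?thesis by (simp add: catalan_trees_forests card_image)
qed

lemma catalan_formula:
  assumes "d \<ge> 1"
  shows "real (card (catalan_trees d k)) * real (d * k + 1) = real ((d * k + 1) choose k)"
  using card_forests_formula[OF assms, of 1 k] by (simp add: card_catalan_trees)

lemma binom_step_bound:
  assumes "d \<ge> 2" "d * m \<le> a + 1"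
  shows "real ((a + 1) choose m) \<le> real d / (real d - 1) * real (a choose m)"
proof -
  have eq: "real (a + 1 - m) * real ((a + 1) choose m) = real (a + 1) * real (a choose m)"
    using binomial_absorb_comp[of "a+1" m] by (metis diff_add_inverse2 of_nat_mult)
  have "2 * m \<le> d * m" using assms(1) by (rule mult_le_mono1)
  then have m: "m \<le> a" using assms(2) by linarith
  have pos: "real (a + 1 - m) > 0" using m by simp
  have "real (a + 1) * (real d - 1) \<le> real d * real (a + 1 - m)"
  proof -
    have "real (d * m) \<le> real (a + 1)" using assms(2) by (simp only: of_nat_le_iff)
    then show ?thesis using m by (simp add: of_nat_diff algebra_simps)
  qed
  then have h: "real (a + 1) \<le> real d / (real d - 1) * real (a + 1 - m)"
    using assms(1) by (simp add: field_simps)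
  have "real (a + 1) * real (a choose m) \<le> (real d / (real d - 1) * real (a + 1 - m)) * real (a choose m)"
    by (rule mult_right_mono[OF h]) simp
  then have "real (a + 1 - m) * real ((a + 1) choose m) \<le> real (a + 1 - m) * (real d / (real d - 1) * real (a choose m))"
    unfolding eq by (simp only: mult_ac)
  then show ?thesis using pos by (rule mult_left_le_imp_le)
qed

lemma binom_iter_bound:
  assumes "d \<ge> 2"
  shows "real ((d * m + 1 + t) choose m) \<le> (real d / (real d - 1)) ^ t * real ((d * m + 1) choose m)"
proof (induction t)
  case 0 then show ?case by simp
next
  case (Suc t)
  have "real ((d * m + 1 + t + 1) choose m) \<le> real d / (real d - 1) * real ((d * m + 1 + t) choose m)"
    by (rule binom_step_bound[OF assms]) simp
  also have "\<dots> \<le> real d / (real d - 1) * ((real d / (real d - 1)) ^ t * real ((d * m + 1) choose m))"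
    using Suc assms by (intro mult_left_mono) simp_all
  finally show ?case by (simp add: algebra_simps)
qed

lemma ddm1_le_e:
  assumes "d \<ge> 2"
  shows "(real d / (real d - 1)) ^ (d - 1) \<le> exp 1"
proof -
  have "real d / (real d - 1) = 1 + 1 / (real d - 1)" using assms by (simp add: field_simps)
  also have "\<dots> \<le> exp (1 / (real d - 1))" by (rule exp_ge_add_one_self)
  finally have "(real d / (real d - 1)) ^ (d - 1) \<le> exp (1 / (real d - 1)) ^ (d - 1)"
    using assms by (intro power_mono) simp_all
  also have "\<dots> = exp (real (d - 1) * (1 / (real d - 1)))" by (rule exp_of_nat_mult[symmetric])
  also have "real (d - 1) * (1 / (real d - 1)) = 1" using assms by (simp add: of_nat_diff)
  finally show ?thesis by simp
qed

lemma catalan_ratio: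
  assumes "d \<ge> 2"
  shows "real (card (catalan_trees d (Suc m))) \<le> exp 1 * real d * real (card (catalan_trees d m))"
proof -
  let ?C = "\<lambda>k. real (card (catalan_trees d k))"
  have f1: "?C (Suc m) * real (d * Suc m + 1) = real ((d * Suc m + 1) choose Suc m)"
    by (rule catalan_formula) (use assms in simp)
  have f0: "?C m * real (d * m + 1) = real ((d * m + 1) choose m)"
    by (rule catalan_formula) (use assms in simp)
  have e: "d * Suc m + 1 = Suc (d * m + d)" by simp
  have "Suc m * ((d * Suc m + 1) choose Suc m) = (d * Suc m + 1) * ((d * m + d) choose m)"
    unfolding e by (rule Suc_times_binomial)
  then have abs: "real (Suc m) * real ((d * Suc m + 1) choose Suc m) = real (d * Suc m + 1) * real ((d * m + d) choose m)"
    by (metis of_nat_mult)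
  have C1: "?C (Suc m) * real (Suc m) = real ((d * m + d) choose m)"
  proof -
    have "(?C (Suc m) * real (Suc m)) * real (d * Suc m + 1) = real (Suc m) * (?C (Suc m) * real (d * Suc m + 1))"
      by (simp only: mult_ac)
    also have "\<dots> = real (d * Suc m + 1) * real ((d * m + d) choose m)"
      unfolding f1 by (rule abs)
    also have "\<dots> = real ((d * m + d) choose m) * real (d * Suc m + 1)" by (simp only: mult_ac)
    finally have fin: "?C (Suc m) * real (Suc m) * real (d * Suc m + 1) = real ((d * m + d) choose m) * real (d * Suc m + 1)" .
    have Y: "real (d * Suc m + 1) \<noteq> 0" by (simp only: of_nat_eq_0_iff)
    show ?thesis using mult_right_cancel[OF Y] fin by blast
  qed
  have "real ((d * m + 1 + (d - 1)) choose m) \<le> (real d / (real d - 1)) ^ (d - 1) * real ((d * m + 1) choose m)"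
    by (rule binom_iter_bound[OF assms])
  moreover have "d * m + 1 + (d - 1) = d * m + d" using assms by simp
  ultimately have "?C (Suc m) * real (Suc m) \<le> (real d / (real d - 1)) ^ (d - 1) * (?C m * real (d * m + 1))"
    using C1 f0 by simp
  also have "\<dots> \<le> exp 1 * (?C m * real (d * m + 1))"
    by (rule mult_right_mono[OF ddm1_le_e[OF assms]]) simp
  also have "\<dots> \<le> exp 1 * (?C m * (real d * real (Suc m)))"
    by (intro mult_left_mono) (use assms in \<open>simp_all add: algebra_simps\<close>)
  finally have "?C (Suc m) * real (Suc m) \<le> (exp 1 * real d * ?C m) * real (Suc m)" by (simp add: algebra_simps)
  then show ?thesis by (simp add: mult_le_cancel_right_pos)
qed

lemma catalan_ratio_iter:
  assumes "d \<ge> 2"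
  shows "real (card (catalan_trees d (m + j))) \<le> (exp 1 * real d) ^ j * real (card (catalan_trees d m))"
proof (induction j)
  case 0 then show ?case by simp
next
  case (Suc j)
  have "real (card (catalan_trees d (m + Suc j))) \<le> exp 1 * real d * real (card (catalan_trees d (m + j)))"
    using catalan_ratio[OF assms, of "m + j"] by simp
  also have "\<dots> \<le> exp 1 * real d * ((exp 1 * real d) ^ j * real (card (catalan_trees d m)))"
    using Suc by (intro mult_left_mono) simp_all
  finally show ?case by (simp add: algebra_simps)
qed

definition nl :: "ptree list \<Rightarrow> nat" where
  "nl cs = length (filter (\<lambda>x. 0 < x) (map internal cs))"

lemma internal_pos_iff: "0 < internal t \<longleftrightarrow> t \<noteq> Leaf"
  by (cases t) auto

lemma nl_card: "nl cs = card {j. j < length cs \<and> cs ! j \<noteq> Leaf}"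
  unfolding nl_def length_filter_conv_card by (rule arg_cong[where f=card]) (auto simp: internal_pos_iff)

lemma self_in_subtrees: "t \<in> subtrees t"
  by (cases t) auto

lemma p_perfect_Node:
  "p_perfect p (Node cs) \<longleftrightarrow> perfect_path p (Node cs) \<or> (\<exists>c\<in>set cs. p_perfect p c)"
  by (auto simp: p_perfect_def)

lemma not_p_perfect_Leaf: "p \<ge> 1 \<Longrightarrow> \<not> p_perfect p Leaf"
  by (cases p) (auto simp: p_perfect_def)

lemma perfect_imp_p_perfect: "perfect_path p t \<Longrightarrow> p_perfect p t"
  using self_in_subtrees by (auto simp: p_perfect_def)

lemma nl2_not_pp:
  assumes "2 \<le> nl cs"
  shows "\<not> perfect_path (Suc q) (Node cs)"
proof
  assume "perfect_path (Suc q) (Node cs)"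
  then obtain i where i: "i < length cs" "\<forall>j<length cs. j \<noteq> i \<longrightarrow> cs ! j = Leaf" by auto
  then have "{j. j < length cs \<and> cs ! j \<noteq> Leaf} \<subseteq> {i}" by auto
  then have "card {j. j < length cs \<and> cs ! j \<noteq> Leaf} \<le> card {i}"
    by (intro card_mono) auto
  then have "card {j. j < length cs \<and> cs ! j \<noteq> Leaf} \<le> 1" by simp
  then show False using assms by (simp add: nl_card)
qed

lemma nl1_shape:
  assumes "nl cs = 1"
  obtains i where "i < length cs" "cs ! i \<noteq> Leaf" "cs = (replicate (length cs) Leaf)[i := cs ! i]"
proof -
  from assms have "card {j. j < length cs \<and> cs ! j \<noteq> Leaf} = 1" by (simp add: nl_card)
  then obtain i where S: "{j. j < length cs \<and> cs ! j \<noteq> Leaf} = {i}" by (auto simp: card_Suc_eq)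
  then have i: "i < length cs" "cs ! i \<noteq> Leaf" by auto
  have "cs = (replicate (length cs) Leaf)[i := cs ! i]"
  proof (rule nth_equalityI)
    show "length cs = length ((replicate (length cs) Leaf)[i := cs ! i])" by simp
    fix j assume j: "j < length cs"
    show "cs ! j = (replicate (length cs) Leaf)[i := cs ! i] ! j"
    proof (cases "j = i")
      case True then show ?thesis using i by simp
    next
      case False
      then have "cs ! j = Leaf" using S j by blast
      then show ?thesis using False j by simp
    qed
  qed
  then show ?thesis using that i by blast
qed

lemma nl0_shape:
  assumes "nl cs = 0"
  shows "cs = replicate (length cs) Leaf"
proof (rule nth_equalityI)
  show "length cs = length (replicate (length cs) Leaf)" by simp
  fix j assume j: "j < length cs"
  have "{j. j < length cs \<and> cs ! j \<noteq> Leaf} = {}"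
    using assms by (simp add: nl_card card_eq_0_iff)
  then show "cs ! j = replicate (length cs) Leaf ! j" using j by auto
qed

lemma nl_upd: 
  assumes "i < d" "c \<noteq> Leaf"
  shows "nl ((replicate d Leaf)[i := c]) = 1"
proof -
  have "{j. j < length ((replicate d Leaf)[i := c]) \<and> (replicate d Leaf)[i := c] ! j \<noteq> Leaf} = {i}"
    using assms by (auto simp: nth_list_update)
  then show ?thesis by (simp add: nl_card)
qed

lemma pp_upd:
  assumes "i < d" "c \<noteq> Leaf"
  shows "perfect_path (Suc q) (Node ((replicate d Leaf)[i := c])) \<longleftrightarrow> perfect_path q c"
proof
  assume "perfect_path (Suc q) (Node ((replicate d Leaf)[i := c]))"
  then obtain i' where i': "i' < d" "perfect_path q ((replicate d Leaf)[i := c] ! i')"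
    "\<forall>j<d. j \<noteq> i' \<longrightarrow> (replicate d Leaf)[i := c] ! j = Leaf" by auto
  have "i' = i"
  proof (rule ccontr)
    assume "i' \<noteq> i"
    then have "(replicate d Leaf)[i := c] ! i = Leaf" using i' assms by auto
    then show False using assms by simp
  qed
  then show "perfect_path q c" using i' assms by simp
next
  assume "perfect_path q c"
  then have pq: "perfect_path q c" .
  have L: "length ((replicate d Leaf)[i := c]) = d" by simp
  show "perfect_path (Suc q) (Node ((replicate d Leaf)[i := c]))"
    unfolding perfect_path.simps L
    by (rule exI[of _ i]) (use assms(1) pq in \<open>simp add: nth_list_update\<close>)
qed

lemma upd_inj:
  assumes "i < d" "i' < d" "c \<noteq> Leaf" "c' \<noteq> Leaf"
    "(replicate d Leaf)[i := c] = (replicate d Leaf)[i' := c']"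
  shows "i = i' \<and> c = c'"
proof -
  have "i = i'"
  proof (rule ccontr)
    assume "i \<noteq> i'"
    then have "(replicate d Leaf)[i' := c'] ! i = Leaf" using assms by simp
    moreover have "(replicate d Leaf)[i := c] ! i = c" using assms(1) by simp
    ultimately show False using assms(3,5) by simp
  qed
  moreover have "c = c'"
  proof -
    have "c = (replicate d Leaf)[i := c] ! i" using assms(1) by simp
    also have "\<dots> = (replicate d Leaf)[i' := c'] ! i" by (simp only: assms(5))
    also have "\<dots> = c'" using \<open>i = i'\<close> assms(2) by simp
    finally show ?thesis .
  qed
  ultimately show ?thesis by simp
qed

fun chain :: "nat \<Rightarrow> nat list \<Rightarrow> ptree \<Rightarrow> ptree" where
  "chain d [] t = t"
| "chain d (i # ks) t = Node ((replicate d Leaf)[i := chain d ks t])"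

lemma chain_not_Leaf: "t \<noteq> Leaf \<Longrightarrow> chain d ks t \<noteq> Leaf"
  by (cases "ks") auto

lemma chain_props:
  assumes "t \<noteq> Leaf" "dcatalan d t" "set ks \<subseteq> {..<d}"
  shows "dcatalan d (chain d ks t) \<and> internal (chain d ks t) = length ks + internal t
         \<and> perfect_path (length ks) (chain d ks t)"
  using assms
proof (induction "ks")
  case Nil then show ?case by simp
next
  case (Cons i ks)
  have i: "i < d" using Cons.prems by simp
  have IH: "dcatalan d (chain d ks t)" "internal (chain d ks t) = length ks + internal t"
    "perfect_path (length ks) (chain d ks t)" using Cons by auto
  have nL: "chain d ks t \<noteq> Leaf" using chain_not_Leaf Cons.prems by blast
  have "\<forall>c\<in>set ((replicate d Leaf)[i := chain d ks t]). dcatalan d c"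
  proof
    fix c assume "c \<in> set ((replicate d Leaf)[i := chain d ks t])"
    then have "c \<in> insert (chain d ks t) (set (replicate d Leaf))" using set_update_subset_insert by fast
    then show "dcatalan d c" using IH by (auto split: if_splits)
  qed
  then have "dcatalan d (chain d (i # ks) t)" using i by simp
  moreover have "sum_list (map internal ((replicate d Leaf)[i := chain d ks t])) = internal (chain d ks t)"
    using i by (simp add: map_update sum_list_update)
  moreover have "perfect_path (length (i # ks)) (chain d (i # ks) t)"
    using pp_upd[OF i nL] IH by simp
  ultimately show ?case using IH by simp
qed

lemma chain_inj:
  assumes "length ks = length ks'" "set ks \<subseteq> {..<d}" "set ks' \<subseteq> {..<d}"
    "t \<noteq> Leaf" "t' \<noteq> Leaf" "chain d ks t = chain d ks' t'"
  shows "ks = ks' \<and> t = t'"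
  using assms
proof (induction "ks" arbitrary: ks')
  case Nil then show ?case by simp
next
  case (Cons i ks)
  then obtain i' js where ks': "ks' = i' # js" by (cases ks') auto
  have "i = i' \<and> chain d ks t = chain d js t'"
    by (rule upd_inj) (use Cons ks' chain_not_Leaf in auto)
  then show ?case using Cons ks' by auto
qed

lemma card_pp_lower:
  assumes "n > p"
  shows "d ^ p * card (catalan_trees d (n - p)) \<le> card {t \<in> catalan_trees d n. perfect_path p t}"
proof -
  let ?L = "{xs. set xs \<subseteq> {..<d} \<and> length xs = p}"
  let ?D = "?L \<times> catalan_trees d (n - p)"
  have nL: "t \<noteq> Leaf" if "t \<in> catalan_trees d (n - p)" for t
    using that assms by (auto simp: catalan_trees_def)
  have inj: "inj_on (\<lambda>(ks, t). chain d ks t) ?D"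
  proof (rule inj_onI)
    fix x y assume a0: "x \<in> ?D" "y \<in> ?D" and e0: "(\<lambda>(ks, t). chain d ks t) x = (\<lambda>(ks, t). chain d ks t) y"
    obtain ks t where x: "x = (ks, t)" by (cases x)
    obtain ks' t' where y: "y = (ks', t')" by (cases y)
    have a: "(ks, t) \<in> ?D" "(ks', t') \<in> ?D" using a0 x y by auto
    have e: "chain d ks t = chain d ks' t'" using e0 x y by simp
    from a have l: "length ks = length ks'" "set ks \<subseteq> {..<d}" "set ks' \<subseteq> {..<d}" by auto
    from a have "t \<noteq> Leaf" "t' \<noteq> Leaf" using nL by auto
    then have "ks = ks' \<and> t = t'" using chain_inj[OF l _ _ e] by blast
    then show "x = y" using x y by simp
  qed
  have sub: "(\<lambda>(ks, t). chain d ks t) ` ?D \<subseteq> {t \<in> catalan_trees d n. perfect_path p t}"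
  proof
    fix z assume "z \<in> (\<lambda>(ks, t). chain d ks t) ` ?D"
    then obtain ks t where z: "z = chain d ks t" and a: "set ks \<subseteq> {..<d}" "length ks = p" "t \<in> catalan_trees d (n - p)"
      by auto
    then have "dcatalan d t" "internal t = n - p" by (auto simp: catalan_trees_def)
    moreover note cp = chain_props[OF nL[OF a(3)] \<open>dcatalan d t\<close> a(1)]
    ultimately have "internal (chain d ks t) = n" using a(2) assms by simp
    then show "z \<in> {t \<in> catalan_trees d n. perfect_path p t}"
      using cp a(2) z by (simp add: catalan_trees_def)
  qed
  have cD: "card ?D = d ^ p * card (catalan_trees d (n - p))"
    unfolding card_cartesian_product card_lists_length_eq[OF finite_lessThan] by simp
  have "d ^ p * card (catalan_trees d (n - p)) = card ((\<lambda>(ks, t). chain d ks t) ` ?D)"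
    using card_image[OF inj] cD by simp
  also have "\<dots> \<le> card {t \<in> catalan_trees d n. perfect_path p t}"
    by (rule card_mono[OF _ sub]) (simp add: finite_catalan_trees)
  finally show ?thesis .
qed

lemma catalan_trees_0: "catalan_trees d 0 = {Leaf}"
proof (intro equalityI subsetI)
  fix t assume "t \<in> catalan_trees d 0" then show "t \<in> {Leaf}"
    by (cases t) (auto simp: catalan_trees_def)
qed (auto simp: catalan_trees_def)

lemma catalan_trees_Suc: "catalan_trees d (Suc n) = Node ` forests d d n"
proof (intro equalityI subsetI)
  fix t assume "t \<in> catalan_trees d (Suc n)" then show "t \<in> Node ` forests d d n"
    by (cases t) (auto simp: catalan_trees_def forests_def)
next
  fix t assume "t \<in> Node ` forests d d n" then show "t \<in> catalan_trees d (Suc n)"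
    by (auto simp: catalan_trees_def forests_def)
qed

lemma Leaf_notin_catalan: "n \<noteq> 0 \<Longrightarrow> Leaf \<notin> catalan_trees d n"
  by (simp add: catalan_trees_def)

lemma sum_upd_internal: "i < d \<Longrightarrow> sum_list (map internal ((replicate d Leaf)[i := c])) = internal c"
  by (simp add: map_update sum_list_update)

lemma card_cons_split:
  "card {cs \<in> forests d (Suc c) n. B (hd cs) \<and> Q (internal (hd cs)) (tl cs)}
   = (\<Sum>m\<le>n. card {t \<in> catalan_trees d m. B t} * card {ts \<in> forests d c (n - m). Q m ts})"
proof -
  let ?f = "\<lambda>(t, ts). t # ts"
  let ?S = "\<lambda>m. {t \<in> catalan_trees d m. B t} \<times> {ts \<in> forests d c (n - m). Q m ts}"
  have eq: "{cs \<in> forests d (Suc c) n. B (hd cs) \<and> Q (internal (hd cs)) (tl cs)} = (\<Union>m\<in>{..n}. ?f ` ?S m)"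
  proof (intro equalityI subsetI)
    fix cs assume "cs \<in> {cs \<in> forests d (Suc c) n. B (hd cs) \<and> Q (internal (hd cs)) (tl cs)}"
    then obtain t ts where cs: "cs = t # ts" and l: "length ts = c" and dc: "dcatalan d t" "\<forall>u\<in>set ts. dcatalan d u"
      and s: "internal t + sum_list (map internal ts) = n" and BQ: "B t" "Q (internal t) ts"
      by (cases cs) (auto simp: forests_def)
    have "(t, ts) \<in> ?S (internal t)" using l dc s BQ by (auto simp: catalan_trees_def forests_def)
    moreover have "internal t \<in> {..n}" using s by simp
    ultimately show "cs \<in> (\<Union>m\<in>{..n}. ?f ` ?S m)" using cs by force
  next
    fix cs assume "cs \<in> (\<Union>m\<in>{..n}. ?f ` ?S m)"
    then obtain m t ts where m: "m \<le> n" and cs: "cs = t # ts" and t: "t \<in> catalan_trees d m" "B t"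
      and ts: "ts \<in> forests d c (n - m)" "Q m ts" by auto
    then show "cs \<in> {cs \<in> forests d (Suc c) n. B (hd cs) \<and> Q (internal (hd cs)) (tl cs)}"
      by (auto simp: catalan_trees_def forests_def)
  qed
  have fin: "finite (?S m)" for m
    by (intro finite_cartesian_product) (auto intro: finite_subset[OF _ finite_catalan_trees] finite_subset[OF _ finite_forests])
  have inj: "inj_on ?f (?S m)" for m by (auto simp: inj_on_def)
  have disj: "?f ` ?S m \<inter> ?f ` ?S m' = {}" if "m \<noteq> m'" for m m'
    using that by (auto simp: catalan_trees_def)
  have "card (\<Union>m\<in>{..n}. ?f ` ?S m) = (\<Sum>m\<le>n. card (?f ` ?S m))"
    by (rule card_UN_disjoint) (use fin disj in auto)
  also have "\<dots> = (\<Sum>m\<le>n. card (?S m))" by (intro sum.cong refl card_image inj)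
  also have "\<dots> = (\<Sum>m\<le>n. card {t \<in> catalan_trees d m. B t} * card {ts \<in> forests d c (n - m). Q m ts})"
    by (simp add: card_cartesian_product)
  finally show ?thesis using eq by simp
qed

definition phi :: "real \<Rightarrow> nat \<Rightarrow> nat \<Rightarrow> real" where
  "phi \<kappa> p m = exp (- \<kappa> * max (real m - real p) 0)"

lemma forest_bound:
  assumes kap: "\<kappa> \<ge> 0"
    and IH: "\<forall>m\<le>n. real (card {t \<in> catalan_trees d m. \<not> p_perfect p t}) \<le> phi \<kappa> p m * real (card (catalan_trees d m))"
  shows "real (card {cs \<in> forests d c n. P (map internal cs) \<and> (\<forall>t\<in>set cs. \<not> p_perfect p t)})
         \<le> exp (- \<kappa> * (real n - real c * real p)) * real (card {cs \<in> forests d c n. P (map internal cs)})"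
  using IH
proof (induction c arbitrary: n P)
  case 0
  show ?case
  proof (cases "n = 0")
    case True
    then have "{cs \<in> forests d 0 n. P (map internal cs) \<and> (\<forall>t\<in>set cs. \<not> p_perfect p t)} = {cs \<in> forests d 0 n. P (map internal cs)}"
      by (auto simp: forests_0)
    then show ?thesis using True by simp
  next
    case False then show ?thesis by (simp add: forests_0)
  qed
next
  case (Suc c)
  let ?Xr = "\<lambda>m. card {ts \<in> forests d c (n - m). P (m # map internal ts) \<and> (\<forall>t\<in>set ts. \<not> p_perfect p t)}"
  let ?Yr = "\<lambda>m. card {ts \<in> forests d c (n - m). P (m # map internal ts)}"
  let ?A = "\<lambda>m. card {t \<in> catalan_trees d m. \<not> p_perfect p t}"
  let ?C = "\<lambda>m. card (catalan_trees d m)"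
  have ne: "cs \<noteq> []" if "cs \<in> forests d (Suc c) n" for cs using that by (auto simp: forests_def)
  have e1: "{cs \<in> forests d (Suc c) n. P (map internal cs) \<and> (\<forall>t\<in>set cs. \<not> p_perfect p t)}
      = {cs \<in> forests d (Suc c) n. \<not> p_perfect p (hd cs) \<and> (\<lambda>m ts. P (m # map internal ts) \<and> (\<forall>t\<in>set ts. \<not> p_perfect p t)) (internal (hd cs)) (tl cs)}"
    (is "?L = ?R")
  proof (rule set_eqI)
    fix cs show "cs \<in> ?L \<longleftrightarrow> cs \<in> ?R"
    proof (cases cs)
      case Nil then show ?thesis by (auto simp: forests_def)
    next
      case (Cons t ts) then show ?thesis by auto
    qed
  qed
  have e2: "{cs \<in> forests d (Suc c) n. P (map internal cs)}
      = {cs \<in> forests d (Suc c) n. True \<and> (\<lambda>m ts. P (m # map internal ts)) (internal (hd cs)) (tl cs)}"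
    (is "?L = ?R")
  proof (rule set_eqI)
    fix cs show "cs \<in> ?L \<longleftrightarrow> cs \<in> ?R"
    proof (cases cs)
      case Nil then show ?thesis by (auto simp: forests_def)
    next
      case (Cons t ts) then show ?thesis by auto
    qed
  qed
  have cX: "card {cs \<in> forests d (Suc c) n. P (map internal cs) \<and> (\<forall>t\<in>set cs. \<not> p_perfect p t)} = (\<Sum>m\<le>n. ?A m * ?Xr m)"
    unfolding e1 by (rule card_cons_split)
  have cY: "card {cs \<in> forests d (Suc c) n. P (map internal cs)} = (\<Sum>m\<le>n. ?C m * ?Yr m)"
    unfolding e2 using card_cons_split[of d c n "\<lambda>_. True" "\<lambda>m ts. P (m # map internal ts)"] by simp
  have step: "real (?A m * ?Xr m) \<le> exp (- \<kappa> * (real n - real (Suc c) * real p)) * real (?C m * ?Yr m)"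
    if m: "m \<le> n" for m
  proof -
    have IHm: "real (?Xr m) \<le> exp (- \<kappa> * (real (n - m) - real c * real p)) * real (?Yr m)"
      using Suc.IH[of "n - m" "\<lambda>\<sigma>. P (m # \<sigma>)"] Suc.prems by auto
    have Am: "real (?A m) \<le> phi \<kappa> p m * real (?C m)" using Suc.prems m by auto
    have "real (?A m * ?Xr m) = real (?A m) * real (?Xr m)" by simp
    also have "\<dots> \<le> (phi \<kappa> p m * real (?C m)) * (exp (- \<kappa> * (real (n - m) - real c * real p)) * real (?Yr m))"
      by (intro mult_mono Am IHm) (auto simp: phi_def)
    also have "\<dots> = (phi \<kappa> p m * exp (- \<kappa> * (real (n - m) - real c * real p))) * real (?C m * ?Yr m)"
      by simp
    also have "phi \<kappa> p m * exp (- \<kappa> * (real (n - m) - real c * real p)) \<le> exp (- \<kappa> * (real n - real (Suc c) * real p))"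
    proof -
      have "phi \<kappa> p m * exp (- \<kappa> * (real (n - m) - real c * real p))
          = exp (- \<kappa> * (max (real m - real p) 0 + (real (n - m) - real c * real p)))"
        by (simp add: phi_def mult_exp_exp algebra_simps)
      also have "\<dots> \<le> exp (- \<kappa> * (real n - real (Suc c) * real p))"
      proof -
        have nm: "real (n - m) = real n - real m" using m by (rule of_nat_diff)
        have "real m - real p + (real (n - m) - real c * real p) = real n - real (Suc c) * real p"
          unfolding nm by (simp add: algebra_simps)
        moreover have "real m - real p \<le> max (real m - real p) 0" by simp
        ultimately have h: "real n - real (Suc c) * real p \<le> max (real m - real p) 0 + (real (n - m) - real c * real p)"
          by (simp only: nm)
        have "- \<kappa> * (max (real m - real p) 0 + (real (n - m) - real c * real p)) \<le> - \<kappa> * (real n - real (Suc c) * real p)"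
          using mult_left_mono[OF h kap] by simp
        then show ?thesis by simp
      qed
      finally show ?thesis .
    qed
    then have "(phi \<kappa> p m * exp (- \<kappa> * (real (n - m) - real c * real p))) * real (?C m * ?Yr m)
        \<le> exp (- \<kappa> * (real n - real (Suc c) * real p)) * real (?C m * ?Yr m)"
      by (rule mult_right_mono) simp
    finally show ?thesis .
  qed
  have "real (card {cs \<in> forests d (Suc c) n. P (map internal cs) \<and> (\<forall>t\<in>set cs. \<not> p_perfect p t)})
      = (\<Sum>m\<le>n. real (?A m * ?Xr m))" unfolding cX by (simp only: of_nat_sum)
  also have "\<dots> \<le> (\<Sum>m\<le>n. exp (- \<kappa> * (real n - real (Suc c) * real p)) * real (?C m * ?Yr m))"
    by (rule sum_mono) (use step in auto)
  also have "\<dots> = exp (- \<kappa> * (real n - real (Suc c) * real p)) * real (card {cs \<in> forests d (Suc c) n. P (map internal cs)})"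
    unfolding cY by (simp add: sum_distrib_left)
  finally show ?case .
qed

lemma card_split3:
  assumes "finite L"
  shows "card L = card {cs \<in> L. 2 \<le> nl cs} + card {cs \<in> L. nl cs = 1} + card {cs \<in> L. nl cs = 0}"
proof -
  have "L = ({cs \<in> L. 2 \<le> nl cs} \<union> {cs \<in> L. nl cs = 1}) \<union> {cs \<in> L. nl cs = 0}" by auto
  then have "card L = card (({cs \<in> L. 2 \<le> nl cs} \<union> {cs \<in> L. nl cs = 1}) \<union> {cs \<in> L. nl cs = 0})" by simp
  also have "\<dots> = card ({cs \<in> L. 2 \<le> nl cs} \<union> {cs \<in> L. nl cs = 1}) + card {cs \<in> L. nl cs = 0}"
    by (rule card_Un_disjoint) (use assms in auto)
  also have "card ({cs \<in> L. 2 \<le> nl cs} \<union> {cs \<in> L. nl cs = 1}) = card {cs \<in> L. 2 \<le> nl cs} + card {cs \<in> L. nl cs = 1}"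
    by (rule card_Un_disjoint) (use assms in auto)
  finally show ?thesis .
qed

lemma card_catalan_Suc_filter:
  "card {t \<in> catalan_trees d (Suc n). R t} = card {cs \<in> forests d d n. R (Node cs)}"
proof -
  have "{t \<in> catalan_trees d (Suc n). R t} = Node ` {cs \<in> forests d d n. R (Node cs)}"
    unfolding catalan_trees_Suc by auto
  moreover have "inj_on Node {cs \<in> forests d d n. R (Node cs)}" by (auto simp: inj_on_def)
  ultimately show ?thesis by (simp add: card_image)
qed

lemma nl1_decomp:
  assumes "cs \<in> forests d d m" "nl cs = 1"
  obtains i c where "i < d" "c \<noteq> Leaf" "c \<in> catalan_trees d m" "cs = (replicate d Leaf)[i := c]"
proof -
  obtain i where i: "i < length cs" "cs ! i \<noteq> Leaf" "cs = (replicate (length cs) Leaf)[i := cs ! i]"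
    using nl1_shape[OF assms(2)] by blast
  have l: "length cs = d" using assms(1) by (simp add: forests_def)
  have dc: "dcatalan d (cs ! i)" using assms(1) i(1) by (auto simp: forests_def)
  have "internal (cs ! i) = sum_list (map internal cs)"
    using sum_upd_internal[of i d "cs ! i"] i l by simp
  also have "\<dots> = m" using assms(1) by (simp add: forests_def)
  finally have "cs ! i \<in> catalan_trees d m" using dc by (simp add: catalan_trees_def)
  then show ?thesis using that i l by auto
qed

lemma upd_in_forests:
  assumes "i < d" "c \<in> catalan_trees d m"
  shows "(replicate d Leaf)[i := c] \<in> forests d d m"
proof -
  have "\<forall>u\<in>set ((replicate d Leaf)[i := c]). dcatalan d u"
  proof
    fix u assume "u \<in> set ((replicate d Leaf)[i := c])"
    then have "u \<in> insert c (set (replicate d Leaf))" using set_update_subset_insert by fast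
    then show "dcatalan d u" using assms by (auto simp: catalan_trees_def split: if_splits)
  qed
  then show ?thesis using assms sum_upd_internal[OF assms(1)] by (simp add: forests_def catalan_trees_def)
qed

lemma inner:
  fixes d p N :: nat and \<kappa> :: real
  assumes d2: "d \<ge> 2" and p1: "p \<ge> 1" and kap: "\<kappa> \<ge> 0"
    and IH: "\<forall>m<N. real (card {t \<in> catalan_trees d m. \<not> p_perfect p t}) \<le> phi \<kappa> p m * real (card (catalan_trees d m))"
  shows "n \<le> N \<Longrightarrow> real (card {t \<in> catalan_trees d n. \<not> p_perfect p t \<and> \<not> perfect_path q t})
    \<le> exp (- \<kappa> * (real n - real q - real d * real p)) * real (card {t \<in> catalan_trees d n. \<not> perfect_path q t})"
proof (induction q arbitrary: n)
  case 0 then show ?case by simp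
next
  case (Suc q)
  let ?lam = "exp (- \<kappa> * (real n - real (Suc q) - real d * real p))"
  show ?case
  proof (cases n)
    case 0
    have X: "{t \<in> catalan_trees d n. \<not> p_perfect p t \<and> \<not> perfect_path (Suc q) t} = {Leaf}"
      using not_p_perfect_Leaf[OF p1] 0 by (auto simp: catalan_trees_0)
    have Y: "{t \<in> catalan_trees d n. \<not> perfect_path (Suc q) t} = {Leaf}"
      using 0 by (auto simp: catalan_trees_0)
    have dp: "0 \<le> real d * real p" by simp
    have h: "real n - real (Suc q) - real d * real p \<le> 0" using 0 dp by linarith
    have "0 \<le> - \<kappa> * (real n - real (Suc q) - real d * real p)"
      by (rule mult_nonpos_nonpos) (use kap h in simp_all)
    then have "1 \<le> ?lam" by simp
    then show ?thesis using X Y by simp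
  next
    case (Suc n')
    let ?LX = "{cs \<in> forests d d n'. \<not> p_perfect p (Node cs) \<and> \<not> perfect_path (Suc q) (Node cs)}"
    let ?LY = "{cs \<in> forests d d n'. \<not> perfect_path (Suc q) (Node cs)}"
    have finX: "finite ?LX" by (rule finite_subset[OF _ finite_forests]) auto
    have finY: "finite ?LY" by (rule finite_subset[OF _ finite_forests]) auto
    have cX: "card {t \<in> catalan_trees d n. \<not> p_perfect p t \<and> \<not> perfect_path (Suc q) t} = card ?LX"
      unfolding Suc by (rule card_catalan_Suc_filter)
    have cY: "card {t \<in> catalan_trees d n. \<not> perfect_path (Suc q) t} = card ?LY"
      unfolding Suc by (rule card_catalan_Suc_filter)
    have lam_nonneg: "0 \<le> ?lam" by simp
    let ?P2 = "\<lambda>\<sigma>::nat list. 2 \<le> length (filter (\<lambda>x. 0 < x) \<sigma>)"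
    have B2: "real (card {cs \<in> ?LX. 2 \<le> nl cs}) \<le> ?lam * real (card {cs \<in> ?LY. 2 \<le> nl cs})"
    proof -
      have sub: "{cs \<in> ?LX. 2 \<le> nl cs} \<subseteq> {cs \<in> forests d d n'. ?P2 (map internal cs) \<and> (\<forall>t\<in>set cs. \<not> p_perfect p t)}"
        by (auto simp: nl_def p_perfect_Node)
      have eqY: "{cs \<in> ?LY. 2 \<le> nl cs} = {cs \<in> forests d d n'. ?P2 (map internal cs)}"
        using nl2_not_pp by (auto simp: nl_def)
      have IH': "\<forall>m\<le>n'. real (card {t \<in> catalan_trees d m. \<not> p_perfect p t}) \<le> phi \<kappa> p m * real (card (catalan_trees d m))"
        using IH Suc.prems Suc by auto
      have "real (card {cs \<in> ?LX. 2 \<le> nl cs}) \<le> real (card {cs \<in> forests d d n'. ?P2 (map internal cs) \<and> (\<forall>t\<in>set cs. \<not> p_perfect p t)})"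
        by (intro of_nat_mono card_mono sub) (rule finite_subset[OF _ finite_forests], auto)
      also have "\<dots> \<le> exp (- \<kappa> * (real n' - real d * real p)) * real (card {cs \<in> forests d d n'. ?P2 (map internal cs)})"
        by (rule forest_bound[OF kap IH'])
      also have "\<dots> \<le> ?lam * real (card {cs \<in> forests d d n'. ?P2 (map internal cs)})"
      proof (rule mult_right_mono)
        have "- \<kappa> * (real n' - real d * real p) \<le> - \<kappa> * (real n - real (Suc q) - real d * real p)"
          using kap Suc by (intro mult_left_mono_neg) auto
        then show "exp (- \<kappa> * (real n' - real d * real p)) \<le> ?lam" by simp
      qed simp
      finally show ?thesis using eqY by simp
    qed
    let ?Z = "{c \<in> catalan_trees d n'. c \<noteq> Leaf \<and> \<not> p_perfect p c \<and> \<not> perfect_path q c}"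
    let ?W = "{c \<in> catalan_trees d n'. c \<noteq> Leaf \<and> \<not> perfect_path q c}"
    let ?g = "\<lambda>(i, c). (replicate d Leaf)[i := c]"
    have finZ: "finite ?Z" by (rule finite_subset[OF _ finite_catalan_trees]) auto
    have finW: "finite ?W" by (rule finite_subset[OF _ finite_catalan_trees]) auto
    have B1: "real (card {cs \<in> ?LX. nl cs = 1}) \<le> ?lam * real (card {cs \<in> ?LY. nl cs = 1})"
    proof -
      have subX: "{cs \<in> ?LX. nl cs = 1} \<subseteq> ?g ` ({..<d} \<times> ?Z)"
      proof
        fix cs assume a: "cs \<in> {cs \<in> ?LX. nl cs = 1}"
        then obtain i c where ic: "i < d" "c \<noteq> Leaf" "c \<in> catalan_trees d n'" "cs = (replicate d Leaf)[i := c]"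
          using nl1_decomp by blast
        have "c \<in> set cs" using ic by (simp add: set_conv_nth) (metis length_list_update length_replicate nth_list_update_eq)
        then have "\<not> p_perfect p c" using a by (auto simp: p_perfect_Node)
        moreover have "\<not> perfect_path q c"
        proof -
          have "\<not> perfect_path (Suc q) (Node ((replicate d Leaf)[i := c]))" using a ic(4) by blast
          then show ?thesis using pp_upd[OF ic(1,2)] by blast
        qed
        ultimately have "(i, c) \<in> {..<d} \<times> ?Z" using ic by simp
        then show "cs \<in> ?g ` ({..<d} \<times> ?Z)" using ic by force
      qed
      have eqY: "{cs \<in> ?LY. nl cs = 1} = ?g ` ({..<d} \<times> ?W)"
      proof (intro equalityI subsetI)
        fix cs assume a: "cs \<in> {cs \<in> ?LY. nl cs = 1}"
        then obtain i c where ic: "i < d" "c \<noteq> Leaf" "c \<in> catalan_trees d n'" "cs = (replicate d Leaf)[i := c]"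
          using nl1_decomp by blast
        have "\<not> perfect_path q c"
        proof -
          have "\<not> perfect_path (Suc q) (Node ((replicate d Leaf)[i := c]))" using a ic(4) by blast
          then show ?thesis using pp_upd[OF ic(1,2)] by blast
        qed
        then have "(i, c) \<in> {..<d} \<times> ?W" using ic by simp
        then show "cs \<in> ?g ` ({..<d} \<times> ?W)" using ic by force
      next
        fix cs assume "cs \<in> ?g ` ({..<d} \<times> ?W)"
        then obtain i c where ic: "i < d" "c \<noteq> Leaf" "c \<in> catalan_trees d n'" "\<not> perfect_path q c"
          and cs: "cs = (replicate d Leaf)[i := c]" by auto
        have "\<not> perfect_path (Suc q) (Node ((replicate d Leaf)[i := c]))" using pp_upd[OF ic(1,2)] ic(4) by blast
        then show "cs \<in> {cs \<in> ?LY. nl cs = 1}"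
          using upd_in_forests[OF ic(1,3)] nl_upd[OF ic(1,2)] cs by blast
      qed
      have injW: "inj_on ?g ({..<d} \<times> ?W)"
      proof (rule inj_onI)
        fix x y assume a: "x \<in> {..<d} \<times> ?W" "y \<in> {..<d} \<times> ?W" and e: "?g x = ?g y"
        obtain i c where x: "x = (i, c)" by (cases x)
        obtain i' c' where y: "y = (i', c')" by (cases y)
        have h: "i < d" "i' < d" "c \<noteq> Leaf" "c' \<noteq> Leaf" using a x y by auto
        have "(replicate d Leaf)[i := c] = (replicate d Leaf)[i' := c']" using e x y by simp
        then have "i = i' \<and> c = c'" by (rule upd_inj[OF h])
        then show "x = y" using x y by simp
      qed
      have cY1: "card {cs \<in> ?LY. nl cs = 1} = d * card ?W"
        unfolding eqY card_image[OF injW] card_cartesian_product by simp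
      have cX1: "card {cs \<in> ?LX. nl cs = 1} \<le> d * card ?Z"
      proof -
        have "card {cs \<in> ?LX. nl cs = 1} \<le> card (?g ` ({..<d} \<times> ?Z))"
          by (rule card_mono[OF _ subX]) (use finZ in simp)
        also have "\<dots> \<le> card ({..<d} \<times> ?Z)" by (rule card_image_le) (use finZ in simp)
        finally show ?thesis by (simp add: card_cartesian_product)
      qed
      have ZW: "real (card ?Z) \<le> ?lam * real (card ?W)"
      proof (cases "n' = 0")
        case True
        then have eZ: "?Z = {}" and eW: "?W = {}" by (auto simp: catalan_trees_0)
        show ?thesis unfolding eZ eW by simp
      next
        case False
        then have eZ: "?Z = {t \<in> catalan_trees d n'. \<not> p_perfect p t \<and> \<not> perfect_path q t}"
          and eW: "?W = {t \<in> catalan_trees d n'. \<not> perfect_path q t}"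
          using Leaf_notin_catalan[OF False] by auto
        have "real (card ?Z) \<le> exp (- \<kappa> * (real n' - real q - real d * real p)) * real (card ?W)"
          unfolding eZ eW by (rule Suc.IH) (use Suc.prems Suc in simp)
        moreover have "real n' - real q - real d * real p = real n - real (Suc q) - real d * real p"
          using Suc by simp
        ultimately show ?thesis by simp
      qed
      have "real (card {cs \<in> ?LX. nl cs = 1}) \<le> real d * real (card ?Z)"
        unfolding of_nat_mult[symmetric] of_nat_le_iff by (rule cX1)
      also have "\<dots> \<le> real d * (?lam * real (card ?W))"
        by (rule mult_left_mono[OF ZW]) simp
      also have "\<dots> = ?lam * real (card {cs \<in> ?LY. nl cs = 1})" unfolding cY1 by simp
      finally show ?thesis .
    qed
    have B0: "real (card {cs \<in> ?LX. nl cs = 0}) \<le> ?lam * real (card {cs \<in> ?LY. nl cs = 0})"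
    proof (cases "n' = 0")
      case True
      have dp: "0 \<le> real d * real p" by simp
      have h: "real n - real (Suc q) - real d * real p \<le> 0"
      proof -
        have "real n = 1" using Suc True by simp
        moreover have "real (Suc q) = real q + 1" by simp
        moreover have "0 \<le> real q" by simp
        ultimately show ?thesis using dp by linarith
      qed
      have "0 \<le> - \<kappa> * (real n - real (Suc q) - real d * real p)"
        by (rule mult_nonpos_nonpos) (use kap h in simp_all)
      then have l1: "1 \<le> ?lam" by simp
      have fY0: "finite {cs \<in> ?LY. nl cs = 0}" by (rule finite_subset[OF _ finY]) auto
      have "card {cs \<in> ?LX. nl cs = 0} \<le> card {cs \<in> ?LY. nl cs = 0}"
        by (rule card_mono[OF fY0]) auto
      then have "real (card {cs \<in> ?LX. nl cs = 0}) \<le> 1 * real (card {cs \<in> ?LY. nl cs = 0})" by simp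
      also have "\<dots> \<le> ?lam * real (card {cs \<in> ?LY. nl cs = 0})" by (rule mult_right_mono[OF l1]) simp
      finally show ?thesis .
    next
      case False
      have "{cs \<in> forests d d n'. nl cs = 0} = {}"
      proof -
        { fix cs assume a: "cs \<in> forests d d n'" "nl cs = 0"
          have "\<forall>x\<in>set (map internal cs). x = 0" using a(2) by (simp add: nl_def filter_empty_conv)
          then have s0: "sum_list (map internal cs) = 0" by (simp add: sum_list_eq_0_iff)
          have s1: "sum_list (map internal cs) = n'" using a(1) by (simp add: forests_def)
          have False using s0 s1 False by linarith }
        then show ?thesis by auto
      qed
      then have eX: "{cs \<in> ?LX. nl cs = 0} = {}" and eY: "{cs \<in> ?LY. nl cs = 0} = {}" by auto
      show ?thesis unfolding eX eY by simp
    qed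
    have "real (card {t \<in> catalan_trees d n. \<not> p_perfect p t \<and> \<not> perfect_path (Suc q) t})
        = real (card {cs \<in> ?LX. 2 \<le> nl cs}) + real (card {cs \<in> ?LX. nl cs = 1}) + real (card {cs \<in> ?LX. nl cs = 0})"
      unfolding cX card_split3[OF finX] by simp
    also have "\<dots> \<le> ?lam * real (card {cs \<in> ?LY. 2 \<le> nl cs}) + ?lam * real (card {cs \<in> ?LY. nl cs = 1}) + ?lam * real (card {cs \<in> ?LY. nl cs = 0})"
      using B2 B1 B0 by linarith
    also have "\<dots> = ?lam * real (card {t \<in> catalan_trees d n. \<not> perfect_path (Suc q) t})"
      unfolding cY card_split3[OF finY] by (simp add: algebra_simps)
    finally show ?thesis .
  qed
qed

lemma kap_dp_le:
  fixes d p :: nat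
  assumes d2: "d \<ge> 2" and p1: "p \<ge> 1"
  shows "(1 / (2 * real p * real d ^ p * exp (real p))) * (real d * real p) \<le> exp (- real p)"
proof -
  have "d ^ 1 \<le> d ^ p" using p1 d2 by (intro power_increasing) auto
  then have dpn: "d \<le> d ^ p" by simp
  have "real d \<le> real (d ^ p)" using dpn by (simp only: of_nat_le_iff)
  then have dp: "real d \<le> real d ^ p" by (simp only: of_nat_power)
  have pos: "0 < 2 * real p * real d ^ p * exp (real p)" using p1 d2 by simp
  have "(1 / (2 * real p * real d ^ p * exp (real p))) * (real d * real p) = real d / (2 * real d ^ p * exp (real p))"
    using p1 by (simp add: field_simps)
  also have "\<dots> \<le> 1 / exp (real p)"
  proof -
    have "0 \<le> real d ^ p" by simp
    then have "real d \<le> 2 * real d ^ p" using dp by linarith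
    then show ?thesis using d2 by (simp add: field_simps)
  qed
  also have "\<dots> = exp (- real p)" by (simp add: exp_minus field_simps)
  finally show ?thesis .
qed

lemma main_bound:
  fixes d p :: nat
  assumes d2: "d \<ge> 2" and p1: "p \<ge> 1"
  defines "\<kappa> \<equiv> 1 / (2 * real p * real d ^ p * exp (real p))"
  shows "real (card {t \<in> catalan_trees d N. \<not> p_perfect p t}) \<le> phi \<kappa> p N * real (card (catalan_trees d N))"
proof (induction N rule: less_induct)
  case (less N)
  have kap: "\<kappa> \<ge> 0" unfolding \<kappa>_def by simp
  show ?case
  proof (cases "N \<le> p")
    case True
    then have "phi \<kappa> p N = 1" by (simp add: phi_def)
    moreover have "card {t \<in> catalan_trees d N. \<not> p_perfect p t} \<le> card (catalan_trees d N)"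
      by (rule card_mono[OF finite_catalan_trees]) auto
    ultimately show ?thesis by simp
  next
    case False
    then have Np: "p < N" by simp
    have IH: "\<forall>m<N. real (card {t \<in> catalan_trees d m. \<not> p_perfect p t}) \<le> phi \<kappa> p m * real (card (catalan_trees d m))"
      using less by blast
    have inn: "real (card {t \<in> catalan_trees d N. \<not> p_perfect p t \<and> \<not> perfect_path p t})
      \<le> exp (- \<kappa> * (real N - real p - real d * real p)) * real (card {t \<in> catalan_trees d N. \<not> perfect_path p t})"
      by (rule inner[OF d2 p1 kap IH]) simp
    have eA: "{t \<in> catalan_trees d N. \<not> p_perfect p t \<and> \<not> perfect_path p t} = {t \<in> catalan_trees d N. \<not> p_perfect p t}"
      using perfect_imp_p_perfect by blast
    let ?C = "real (card (catalan_trees d N))"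
    let ?P = "{t \<in> catalan_trees d N. perfect_path p t}"
    have cY: "real (card {t \<in> catalan_trees d N. \<not> perfect_path p t}) = ?C - real (card ?P)"
    proof -
      have "{t \<in> catalan_trees d N. \<not> perfect_path p t} = catalan_trees d N - ?P" by auto
      moreover have "card (catalan_trees d N - ?P) = card (catalan_trees d N) - card ?P"
        by (rule card_Diff_subset) (auto intro: finite_subset[OF _ finite_catalan_trees])
      moreover have "card ?P \<le> card (catalan_trees d N)"
        by (rule card_mono[OF finite_catalan_trees]) auto
      ultimately show ?thesis by (simp add: of_nat_diff)
    qed
    have Plow: "exp (- real p) * ?C \<le> real (card ?P)"
    proof -
      have r: "?C \<le> (exp 1 * real d) ^ p * real (card (catalan_trees d (N - p)))"
        using catalan_ratio_iter[OF d2, of "N - p" p] Np by simp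
      have e: "(exp 1 * real d) ^ p = exp (real p) * real d ^ p"
        by (simp add: power_mult_distrib exp_of_nat_mult[symmetric])
      have "exp (- real p) * ?C \<le> exp (- real p) * (exp (real p) * real d ^ p * real (card (catalan_trees d (N - p))))"
        using r e by (intro mult_left_mono) simp_all
      also have "\<dots> = real d ^ p * real (card (catalan_trees d (N - p)))"
        by (simp add: exp_minus field_simps)
      also have "\<dots> = real (d ^ p * card (catalan_trees d (N - p)))" by simp
      also have "\<dots> \<le> real (card ?P)"
        using card_pp_lower[OF Np, of d] by (simp only: of_nat_le_iff)
      finally show ?thesis .
    qed
    have Ynb: "real (card {t \<in> catalan_trees d N. \<not> perfect_path p t}) \<le> (1 - exp (- real p)) * ?C"
      using cY Plow by (simp add: algebra_simps)
    have fac: "exp (- \<kappa> * (real N - real p - real d * real p)) * (1 - exp (- real p)) \<le> exp (- \<kappa> * (real N - real p))"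
    proof -
      have "1 - exp (- real p) \<le> exp (- exp (- real p))"
        using exp_ge_add_one_self[of "- exp (- real p)"] by simp
      have "exp (- \<kappa> * (real N - real p - real d * real p)) = exp (- \<kappa> * (real N - real p) + \<kappa> * (real d * real p))"
        by (rule arg_cong[where f=exp]) (simp add: algebra_simps)
      also have "\<dots> = exp (- \<kappa> * (real N - real p)) * exp (\<kappa> * (real d * real p))" by (rule exp_add)
      finally have split: "exp (- \<kappa> * (real N - real p - real d * real p)) = exp (- \<kappa> * (real N - real p)) * exp (\<kappa> * (real d * real p))" .
      have "exp (\<kappa> * (real d * real p)) * (1 - exp (- real p)) \<le> exp (\<kappa> * (real d * real p)) * exp (- exp (- real p))"
        by (rule mult_left_mono) (use \<open>1 - exp (- real p) \<le> exp (- exp (- real p))\<close> in simp_all)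
      also have "\<dots> = exp (\<kappa> * (real d * real p) - exp (- real p))" by (simp add: mult_exp_exp)
      also have "\<dots> \<le> 1"
        using kap_dp_le[OF d2 p1] unfolding \<kappa>_def by simp
      finally have "exp (\<kappa> * (real d * real p)) * (1 - exp (- real p)) \<le> 1" .
      then have "exp (- \<kappa> * (real N - real p)) * (exp (\<kappa> * (real d * real p)) * (1 - exp (- real p))) \<le> exp (- \<kappa> * (real N - real p)) * 1"
        by (rule mult_left_mono) simp
      then show ?thesis unfolding split by (simp add: mult.assoc)
    qed
    have "real (card {t \<in> catalan_trees d N. \<not> p_perfect p t})
        \<le> exp (- \<kappa> * (real N - real p - real d * real p)) * ((1 - exp (- real p)) * ?C)"
      using inn eA Ynb by (metis (no_types, lifting) exp_ge_zero mult_left_mono order_trans)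
    also have "\<dots> = (exp (- \<kappa> * (real N - real p - real d * real p)) * (1 - exp (- real p))) * ?C"
      by (simp add: mult.assoc)
    also have "\<dots> \<le> exp (- \<kappa> * (real N - real p)) * ?C"
      by (rule mult_right_mono[OF fac]) simp
    also have "exp (- \<kappa> * (real N - real p)) = phi \<kappa> p N"
      using Np by (simp add: phi_def)
    finally show ?thesis .
  qed
qed

theorem theorem1p7:
  fixes d p k :: nat
  assumes "d \<ge> 2" and "p \<ge> 1"
  shows "real (card {t \<in> catalan_trees d k. \<not> p_perfect p t}) / real (card (catalan_trees d k))
           \<le> exp (- (1 / (2 * real p * real d ^ p * exp (real p))) * max (real k - real p) 0)"
proof -
  have mb: "real (card {t \<in> catalan_trees d k. \<not> p_perfect p t})
      \<le> exp (- (1 / (2 * real p * real d ^ p * exp (real p))) * max (real k - real p) 0) * real (card (catalan_trees d k))"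
    using main_bound[OF assms, of k] by (simp add: phi_def)
  show ?thesis
  proof (cases "card (catalan_trees d k) = 0")
    case True then show ?thesis by simp
  next
    case False
    then have "0 < real (card (catalan_trees d k))" by simp
    then show ?thesis using mb by (simp add: pos_divide_le_eq)
  qed
qed

end
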